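(* Let $X\sim F$ be a real random variable with $P_F(a\le|X|\le b)=1$, where $0<a<b<\infty$, and let $\sigma^2=\sigma^2(F)=\mathrm{Var}_F(X)$. Let $$K^2=\frac{4}{\big(\frac ba+\frac ab\big)^2}$$ (with $K>0$), and let $\alpha$ satisfy $1-K^2<\alpha<1$. Then, with $c^2 = 1-\frac{\sqrt{1-\alpha}}{K}$ (which lies in $(0,1)$), $$P_F\Big(\sigma^2\le\frac{X^2}{c^2}\Big)\ge1-\alpha.$$ *)

theory Defs
  imports "HOL-Probability.Probability"
begin

end

theory Submission
  imports Defs
begin

lemma final_arith:
  fixes m Mx mu V th t p al K :: real
  assumes "0 < m" "m < Mx" "m \<le> mu" "V \<le> (m+Mx)*mu - m*Mx" "0 < V"
    "0 < th" "th < 1" "mu \<le> th*mu + V/(2*t) + t/2*p" "t = V/((1-th)*mu)"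
    "(1-th)^2 = (1-al)/K^2" "K^2 = 4*m*Mx/(m+Mx)^2" "K > 0"
  shows "p \<ge> 1 - al"
proof -
  have mu0: "mu > 0" using assms by linarith
  have t0: "t > 0" using assms mu0 by simp
  have "V/(2*t) = (1-th)*mu/2" unfolding assms(9) using assms(5,7) mu0 by (simp add: field_simps)
  hence "(1-th)*mu \<le> t*p" using assms(8) by (simp add: algebra_simps)
  hence p1: "p \<ge> (1-th)*mu/t" using t0 by (simp add: field_simps)
  have "(1-th)*mu/t = (1-th)^2*mu^2/V" unfolding assms(9) using assms(5,7) mu0 by (simp add: field_simps power2_eq_square)
  with p1 have p2: "p \<ge> (1-th)^2*mu^2/V" by simp
  have "4*m*Mx*V \<le> 4*m*Mx*((m+Mx)*mu - m*Mx)" using assms by simp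
  also have "\<dots> \<le> (m+Mx)^2*mu^2"
  proof -
    have "(m+Mx)^2*mu^2 - 4*m*Mx*((m+Mx)*mu - m*Mx) = ((m+Mx)*mu - 2*m*Mx)^2"
      by (simp add: power2_eq_square algebra_simps)
    moreover have "((m+Mx)*mu - 2*m*Mx)^2 \<ge> 0" by simp
    ultimately show ?thesis by linarith
  qed
  finally have q: "4*m*Mx*V \<le> (m+Mx)^2*mu^2" .
  have "K^2 \<le> mu^2/V" unfolding assms(11) using q assms(1,2,5) by (simp add: field_simps)
  hence "(1-th)^2 * K^2 \<le> (1-th)^2*(mu^2/V)" by (intro mult_left_mono) auto
  moreover have "(1-th)^2 * K^2 = 1 - al" unfolding assms(10) using assms(12) by (simp add: field_simps)
  ultimately show ?thesis using p2 by (simp add: times_divide_eq_right)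
qed



theorem theorem4p1:
  fixes M :: "'a measure" and X :: "'a \<Rightarrow> real" and a b K \<alpha> c :: real
  assumes "prob_space M"
    and "X \<in> borel_measurable M"
    and "0 < a" and "a < b"
    and "prob_space.prob M {\<omega> \<in> space M. a \<le> \<bar>X \<omega>\<bar> \<and> \<bar>X \<omega>\<bar> \<le> b} = 1"
    and "K > 0" and "K\<^sup>2 = 4 / (b / a + a / b)\<^sup>2"
    and "1 - K\<^sup>2 < \<alpha>" and "\<alpha> < 1"
    and "c\<^sup>2 = 1 - sqrt (1 - \<alpha>) / K"
  shows "prob_space.prob M {\<omega> \<in> space M. prob_space.variance M X \<le> (X \<omega>)\<^sup>2 / c\<^sup>2} \<ge> 1 - \<alpha>"
proof -
  interpret P: prob_space M by fact
  have Xm[measurable]: "X \<in> borel_measurable M" by fact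
  define Y where "Y \<omega> = (X \<omega>)^2" for \<omega>
  have Ym[measurable]: "Y \<in> borel_measurable M" unfolding Y_def by measurable
  have ae: "AE \<omega> in M. a \<le> \<bar>X \<omega>\<bar> \<and> \<bar>X \<omega>\<bar> \<le> b"
    using P.AE_prob_1[OF assms(5)] by auto
  have aeY: "AE \<omega> in M. a^2 \<le> Y \<omega> \<and> Y \<omega> \<le> b^2"
    using ae
  proof eventually_elim
    case (elim \<omega>)
    have "a^2 \<le> \<bar>X \<omega>\<bar>^2" using elim assms(3) by (intro power_mono) auto
    moreover have "\<bar>X \<omega>\<bar>^2 \<le> b^2" using elim assms(3) by (intro power_mono) auto
    ultimately show ?case unfolding Y_def by simp
  qed
  have intX: "integrable M X"
    by (rule P.integrable_const_bound[where B=b]) (use ae in auto)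
  have intY: "integrable M Y"
  proof (rule P.integrable_const_bound[where B="b^2"])
    show "AE \<omega> in M. norm (Y \<omega>) \<le> b^2" using aeY
    proof eventually_elim
      case (elim \<omega>)
      have "0 \<le> Y \<omega>" using elim by (meson order_trans zero_le_power2)
      thus ?case using elim by simp
    qed
  qed simp
  have intY2: "integrable M (\<lambda>\<omega>. (Y \<omega>)^2)"
  proof (rule P.integrable_const_bound[where B="(b^2)^2"])
    show "AE \<omega> in M. norm ((Y \<omega>)^2) \<le> (b^2)^2"
      using aeY
    proof eventually_elim
      case (elim \<omega>)
      have "0 \<le> Y \<omega>" using elim assms(3) by (meson order_trans zero_le_power2)
      hence "(Y \<omega>)^2 \<le> (b^2)^2" using elim by (intro power_mono) auto
      thus ?case by simp
    qed
  qed simp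
  define mu where "mu = integral\<^sup>L M Y"
  define V where "V = integral\<^sup>L M (\<lambda>\<omega>. (Y \<omega>)^2)"
  have mu_ge: "a^2 \<le> mu"
  proof -
    have "integral\<^sup>L M (\<lambda>_. a^2) \<le> mu" unfolding mu_def
      by (rule integral_mono_AE) (use intY aeY in auto)
    thus ?thesis by (simp add: P.prob_space)
  qed
  have V_le: "V \<le> (a^2+b^2)*mu - a^2*b^2"
  proof -
    have "V \<le> integral\<^sup>L M (\<lambda>\<omega>. (a^2+b^2)*Y \<omega> - a^2*b^2)" unfolding V_def
    proof (rule integral_mono_AE)
      show "AE \<omega> in M. (Y \<omega>)^2 \<le> (a^2+b^2)*Y \<omega> - a^2*b^2"
        using aeY
      proof eventually_elim
        case (elim \<omega>)
        have "0 \<le> (Y \<omega> - a^2)*(b^2 - Y \<omega>)" using elim by simp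
        thus ?case by (simp add: algebra_simps power2_eq_square)
      qed
    qed (use intY2 intY in auto)
    also have "\<dots> = (a^2+b^2)*mu - a^2*b^2"
      unfolding mu_def using intY by (simp add: P.prob_space)
    finally show ?thesis .
  qed
  have V_pos: "V > 0"
  proof -
    have "integral\<^sup>L M (\<lambda>_. (a^2)^2) \<le> V" unfolding V_def
    proof (rule integral_mono_AE)
      show "AE \<omega> in M. (a^2)^2 \<le> (Y \<omega>)^2"
        using aeY by eventually_elim (intro power_mono, auto)
    qed (use intY2 in auto)
    hence "(a^2)^2 \<le> V" by (simp add: P.prob_space)
    moreover have "0 < (a^2)^2" using assms(3) by simp
    ultimately show ?thesis by linarith
  qed
  define th where "th = c^2"
  define s where "s = sqrt (1 - \<alpha>)"
  have s0: "0 < s" using assms(9) unfolding s_def by simp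
  have s2: "s^2 = 1 - \<alpha>" using assms(9) unfolding s_def by simp
  have sK: "s < K"
  proof -
    have "s^2 < K^2" using s2 assms(8) by simp
    thus ?thesis using assms(6) s0 by (smt (verit) power_mono)
  qed
  have th_eq: "th = 1 - s/K" using assms(10) unfolding th_def s_def by simp
  have th0: "0 < th"
  proof -
    have "s/K < 1" using sK assms(6) by simp
    thus ?thesis using th_eq by simp
  qed
  have th1: "th < 1" using th_eq s0 assms(6) by simp
  have thK: "(1-th)^2 = (1-\<alpha>)/K^2" using th_eq s2 by (simp add: power_divide)
  have K2: "K^2 = 4*(a^2)*(b^2)/(a^2+b^2)^2"
    using assms(7) assms(3,4) by (simp add: field_simps power2_eq_square)
  define A where "A = {\<omega>\<in>space M. th*mu \<le> Y \<omega>}"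
  have Am[measurable]: "A \<in> sets M" unfolding A_def by measurable
  have mu0: "mu > 0" using mu_ge assms(3) by (smt (verit) zero_less_power)
  define t where "t = V/((1-th)*mu)"
  have t0: "t > 0" unfolding t_def using V_pos th1 mu0 by simp
  have key: "mu \<le> th*mu + V/(2*t) + t/2 * P.prob A"
  proof -
    have intI: "integrable M (indicator A :: 'a \<Rightarrow> real)"
      by (rule integrable_real_indicator) (auto simp: less_top[symmetric])
    have "integral\<^sup>L M Y \<le> integral\<^sup>L M (\<lambda>\<omega>. th*mu + (Y \<omega>)^2/(2*t) + t/2 * indicator A \<omega>)"
    proof (rule integral_mono_AE)
      show "integrable M (\<lambda>\<omega>. th*mu + (Y \<omega>)^2/(2*t) + t/2 * indicator A \<omega>)"
        using intY2 intI by auto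
      show "AE \<omega> in M. Y \<omega> \<le> th*mu + (Y \<omega>)^2/(2*t) + t/2 * indicator A \<omega>"
        using AE_space
      proof eventually_elim
        case (elim \<omega>)
        show ?case
        proof (cases "\<omega> \<in> A")
          case True
          have "0 \<le> (Y \<omega> - t)^2" by simp
          hence "Y \<omega> \<le> (Y \<omega>)^2/(2*t) + t/2" using t0
            by (simp add: field_simps power2_eq_square algebra_simps)
          moreover have "0 \<le> th*mu" using th0 mu0 by simp
          ultimately show ?thesis using True by simp
        next
          case False
          hence "Y \<omega> < th*mu" using elim unfolding A_def by auto
          moreover have "0 \<le> (Y \<omega>)^2/(2*t)" using t0 by simp
          ultimately show ?thesis using False by simp
        qed
      qed
    qed (use intY in auto)
    hence "mu \<le> integral\<^sup>L M (\<lambda>\<omega>. th*mu + (Y \<omega>)^2/(2*t) + t/2 * indicator A \<omega>)"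
      unfolding mu_def[symmetric] .
    also have "\<dots> = th*mu + V/(2*t) + t/2 * P.prob A"
      using intY2 intI unfolding V_def
      by (simp add: P.prob_space Bochner_Integration.integral_add Bochner_Integration.integral_divide_zero)
    finally show ?thesis .
  qed
  have pA: "P.prob A \<ge> 1 - \<alpha>"
    by (rule final_arith[where m="a^2" and Mx="b^2" and mu=mu and V=V and th=th and t=t and K=K])
       (use assms(3,4,6) mu_ge V_le V_pos th0 th1 key t_def thK K2 in \<open>auto intro: power_strict_mono\<close>)
  have var_le: "P.variance X \<le> mu"
    using P.variance_eq[OF intX] intY unfolding mu_def Y_def by simp
  have "A \<subseteq> {\<omega> \<in> space M. P.variance X \<le> (X \<omega>)\<^sup>2 / c\<^sup>2}"
  proof
    fix \<omega> assume "\<omega> \<in> A"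
    hence "\<omega> \<in> space M" "th*mu \<le> Y \<omega>" unfolding A_def by auto
    hence "mu \<le> Y \<omega> / th" using th0 by (simp add: field_simps)
    thus "\<omega> \<in> {\<omega> \<in> space M. P.variance X \<le> (X \<omega>)\<^sup>2 / c\<^sup>2}"
      using var_le \<open>\<omega> \<in> space M\<close> unfolding th_def Y_def by auto
  qed
  hence "P.prob A \<le> P.prob {\<omega> \<in> space M. P.variance X \<le> (X \<omega>)\<^sup>2 / c\<^sup>2}"
    by (intro P.finite_measure_mono) measurable
  thus ?thesis using pA by simp
qed

end
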